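(* Let $N\ge1$, let $\phi:H_0(S_N)\to M_N$ be the quotient morphism sending $\pi_i\mapsto \pi_i$, where $M_N$ is the quotient of $H_0(S_N)$ by the relations $\pi_i\pi_{i+1}\pi_i=\pi_i\pi_{i+1}$ ($1\le i\le N-2$), let $\Psi$ be the automorphism of $H_0(S_N)$ with $\Psi(\pi_i)=\pi_{N-i}$, and define $\omega(x)=(\phi(x),\phi(\Psi(x)))$ for $x\in H_0(S_N)$. Then every nonempty fiber $\{w\in S_N:\ \omega(\pi_w)=c\}$ of $\omega$ contains a unique $[4321]$-avoiding permutation.
   Context: $S_N$ is generated by simple transpositions $s_1,\dots,s_{N-1}$; permutations are in one-line notation and composed as functions. $H_0(S_N)$ is generated by $\pi_1,\dots,\pi_{N-1}$ with relations $\pi_i^2=\pi_i$, $\pi_i\pi_j=\pi_j\pi_i$ for $|i-j|\ge2$, $\pi_i\pi_{i+1}\pi_i=\pi_{i+1}\pi_i\pi_{i+1}$; $\pi_w:=\pi_{i_1}\cdots\pi_{i_k}$ for any reduced word $w=s_{i_1}\cdots s_{i_k}$, a bijection $S_N\to H_0(S_N)$. A permutation avoids $[4321]$ if its one-line notation has no decreasing subsequence of length $4$. ($M_N$ is isomorphic to the monoid $\operatorname{NDPF}_N$ of order-preserving regressive maps of $\{1,\dots,N\}$.) *)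

theory Defs
  imports "HOL-Combinatorics.Permutations" "HOL-Combinatorics.Transposition"
begin

definition simple_transp :: "nat \<Rightarrow> nat \<Rightarrow> nat" where
  "simple_transp i = transpose i (Suc i)"

definition perm_of_word :: "nat list \<Rightarrow> nat \<Rightarrow> nat" where
  "perm_of_word ws = foldr (\<lambda>i f. simple_transp i \<circ> f) ws id"

definition is_word :: "nat \<Rightarrow> nat list \<Rightarrow> bool" where
  "is_word N ws \<longleftrightarrow> set ws \<subseteq> {1..<N}"

definition reduced_word :: "nat \<Rightarrow> (nat \<Rightarrow> nat) \<Rightarrow> nat list \<Rightarrow> bool" where
  "reduced_word N w ws \<longleftrightarrow> is_word N ws \<and> perm_of_word ws = w \<and>
     (\<forall>vs. is_word N vs \<and> perm_of_word vs = w \<longrightarrow> length ws \<le> length vs)"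

text \<open>A chosen reduced word; pi_w = pi_{i_1}...pi_{i_k} for it.\<close>
definition red_word :: "nat \<Rightarrow> (nat \<Rightarrow> nat) \<Rightarrow> nat list" where
  "red_word N w = (SOME ws. reduced_word N w ws)"

inductive M_rel :: "nat \<Rightarrow> nat list \<Rightarrow> nat list \<Rightarrow> bool" for N :: nat where
  idem: "1 \<le> i \<Longrightarrow> i < N \<Longrightarrow> M_rel N [i, i] [i]"
| comm: "1 \<le> i \<Longrightarrow> i < N \<Longrightarrow> 1 \<le> j \<Longrightarrow> j < N \<Longrightarrow> i + 2 \<le> j \<or> j + 2 \<le> i
          \<Longrightarrow> M_rel N [i, j] [j, i]"
| braid: "1 \<le> i \<Longrightarrow> i + 1 < N \<Longrightarrow> M_rel N [i, i + 1, i] [i + 1, i, i + 1]"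
| extra: "1 \<le> i \<Longrightarrow> i + 1 < N \<Longrightarrow> M_rel N [i, i + 1, i] [i, i + 1]"

definition M_step :: "nat \<Rightarrow> nat list \<Rightarrow> nat list \<Rightarrow> bool" where
  "M_step N u v \<longleftrightarrow> (\<exists>a b x y. u = a @ x @ b \<and> v = a @ y @ b \<and> (M_rel N x y \<or> M_rel N y x))"

definition M_cong :: "nat \<Rightarrow> nat list \<Rightarrow> nat list \<Rightarrow> bool" where
  "M_cong N = (M_step N)\<^sup>*\<^sup>*"

text \<open>The element of M_N represented by a word (its congruence class).\<close>
definition M_class :: "nat \<Rightarrow> nat list \<Rightarrow> nat list set" where
  "M_class N ws = {vs. M_cong N ws vs}"

definition Psi_word :: "nat \<Rightarrow> nat list \<Rightarrow> nat list" where
  "Psi_word N ws = map (\<lambda>i. N - i) ws"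

definition omega :: "nat \<Rightarrow> (nat \<Rightarrow> nat) \<Rightarrow> nat list set \<times> nat list set" where
  "omega N w = (M_class N (red_word N w), M_class N (Psi_word N (red_word N w)))"

definition avoids_4321 :: "nat \<Rightarrow> (nat \<Rightarrow> nat) \<Rightarrow> bool" where
  "avoids_4321 N w \<longleftrightarrow> \<not> (\<exists>i j k l. 1 \<le> i \<and> i < j \<and> j < k \<and> k < l \<and> l \<le> N \<and>
       w i > w j \<and> w j > w k \<and> w k > w l)"

end

theory Submission
  imports Defs
begin


definition pi :: "nat \<Rightarrow> nat \<Rightarrow> nat" where
  "pi i x = (if x = Suc i then i else x)"

definition rep :: "nat list \<Rightarrow> nat \<Rightarrow> nat" where
  "rep ws = foldr (\<lambda>i f. pi i \<circ> f) ws id"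

lemma rep_Nil[simp]: "rep [] = id" by (simp add: rep_def)
lemma rep_Cons[simp]: "rep (i # ws) = pi i \<circ> rep ws" by (simp add: rep_def)
lemma rep_append[simp]: "rep (xs @ ys) = rep xs \<circ> rep ys"
  by (induction xs) auto

lemma M_rel_rep: "M_rel N x y \<Longrightarrow> rep x = rep y"
  by (induction rule: M_rel.induct) (auto simp: pi_def fun_eq_iff)

lemma M_step_rep: "M_step N u v \<Longrightarrow> rep u = rep v"
  unfolding M_step_def using M_rel_rep by fastforce

lemma M_cong_rep: "M_cong N u v \<Longrightarrow> rep u = rep v"
  unfolding M_cong_def
  by (induction rule: rtranclp_induct) (auto dest: M_step_rep)

lemma M_step_sym: "M_step N u v \<Longrightarrow> M_step N v u"
  unfolding M_step_def by blast

lemma M_cong_refl[simp]: "M_cong N u u" by (simp add: M_cong_def)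

lemma M_cong_trans: "M_cong N u v \<Longrightarrow> M_cong N v w \<Longrightarrow> M_cong N u w"
  unfolding M_cong_def by auto

lemma M_cong_sym: "M_cong N u v \<Longrightarrow> M_cong N v u"
  unfolding M_cong_def
proof (induction rule: rtranclp_induct)
  case base then show ?case by simp
next
  case (step y z) then show ?case
    by (meson M_step_sym converse_rtranclp_into_rtranclp)
qed

lemma M_step_ctx: "M_step N u v \<Longrightarrow> M_step N (a @ u @ b) (a @ v @ b)"
  unfolding M_step_def
proof (elim exE conjE)
  fix a' b' x y assume "u = a' @ x @ b'" "v = a' @ y @ b'" "M_rel N x y \<or> M_rel N y x"
  then show "\<exists>aa ba x y. a @ u @ b = aa @ x @ ba \<and> a @ v @ b = aa @ y @ ba \<and> (M_rel N x y \<or> M_rel N y x)"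
    by (rule_tac x="a @ a'" in exI, rule_tac x="b' @ b" in exI) auto
qed

lemma M_cong_ctx: "M_cong N u v \<Longrightarrow> M_cong N (a @ u @ b) (a @ v @ b)"
  unfolding M_cong_def
proof (induction rule: rtranclp_induct)
  case base then show ?case by simp
next
  case (step y z) then show ?case
    by (meson M_step_ctx rtranclp.rtrancl_into_rtrancl)
qed

lemma M_rel_cong: "M_rel N x y \<Longrightarrow> M_cong N (a @ x @ b) (a @ y @ b)"
  unfolding M_cong_def M_step_def by (rule r_into_rtranclp) blast

lemma M_cong_ctxL: "M_cong N u v \<Longrightarrow> M_cong N (a @ u) (a @ v)"
  using M_cong_ctx[of N u v a "[]"] by simp
lemma M_cong_ctxR: "M_cong N u v \<Longrightarrow> M_cong N (u @ b) (v @ b)"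
  using M_cong_ctx[of N u v "[]" b] by simp

definition commutes :: "nat \<Rightarrow> nat \<Rightarrow> nat \<Rightarrow> bool" where
  "commutes N k j \<longleftrightarrow> 1 \<le> k \<and> k < N \<and> 1 \<le> j \<and> j < N \<and> (k + 2 \<le> j \<or> j + 2 \<le> k)"

lemma commute1: "\<forall>k\<in>set xs. commutes N k j \<Longrightarrow> M_cong N (xs @ [j]) (j # xs)"
proof (induction xs)
  case Nil then show ?case by simp
next
  case (Cons k xs)
  then have "M_cong N ((k # xs) @ [j]) (k # j # xs)"
    using M_cong_ctxL[of N "xs @ [j]" "j # xs" "[k]"] by simp
  moreover have "M_rel N [k,j] [j,k]"
    using Cons.prems by (auto simp: commutes_def intro!: M_rel.comm)
  then have "M_cong N (k # j # xs) (j # k # xs)"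
    using M_rel_cong[of N "[k,j]" "[j,k]" "[]" xs] by simp
  ultimately show ?case using M_cong_trans by blast
qed

lemma commuteL: "\<forall>k\<in>set xs. \<forall>j\<in>set ys. commutes N k j \<Longrightarrow> M_cong N (xs @ ys) (ys @ xs)"
proof (induction ys)
  case Nil then show ?case by simp
next
  case (Cons j ys)
  have "M_cong N (xs @ [j] @ ys) (j # xs @ ys)"
    using M_cong_ctxR[OF commute1[of xs N j], of ys] Cons.prems by simp
  moreover have "M_cong N (j # xs @ ys) (j # ys @ xs)"
    using M_cong_ctxL[OF Cons.IH, of "[j]"] Cons.prems by simp
  ultimately show ?case using M_cong_trans by fastforce
qed

lemma upt_split: "c \<le> j \<Longrightarrow> j < n \<Longrightarrow> [c..<n] = [c..<j] @ j # [Suc j..<n]"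
proof -
  assume a: "c \<le> j" "j < n"
  have "[c..<j + (n - j)] = [c..<j] @ [j..<j + (n - j)]" using a by (rule_tac upt_add_eq_append) simp
  then show ?thesis using a by (simp add: upt_conv_Cons)
qed

lemma absorbR: assumes "1 \<le> c" "c \<le> j" "j \<le> i" "i < N"
  shows "M_cong N ([c..<Suc i] @ [j]) [c..<Suc i]"
proof (cases "j = i")
  case True
  have "M_cong N ([c..<i] @ [i,i] @ []) ([c..<i] @ [i] @ [])"
    by (rule M_rel_cong) (use assms in \<open>auto intro: M_rel.idem\<close>)
  then show ?thesis using True assms by simp
next
  case False
  then have ji: "j < i" using assms by simp
  have sp: "[c..<Suc i] = [c..<j] @ [j, Suc j] @ [Suc (Suc j)..<Suc i]"
    using upt_split[of c j "Suc i"] upt_conv_Cons[of "Suc j" "Suc i"] assms ji by simp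
  have c0: "M_cong N ([Suc (Suc j)..<Suc i] @ [j]) (j # [Suc (Suc j)..<Suc i])"
    by (rule commute1) (use assms in \<open>auto simp: commutes_def\<close>)
  have 1: "M_cong N ([c..<Suc i] @ [j]) (([c..<j] @ [j, Suc j]) @ (j # [Suc (Suc j)..<Suc i]))"
    using M_cong_ctxL[OF c0, of "[c..<j] @ [j, Suc j]"] unfolding sp by (simp only: append_assoc append_Cons append_Nil)
  have 2: "M_cong N ([c..<j] @ [j, Suc j, j] @ [Suc (Suc j)..<Suc i]) ([c..<j] @ [j, Suc j] @ [Suc (Suc j)..<Suc i])"
    by (rule M_rel_cong) (use assms ji in \<open>auto intro: M_rel.extra[simplified]\<close>)
  have 3: "M_cong N (([c..<j] @ [j, Suc j]) @ (j # [Suc (Suc j)..<Suc i])) [c..<Suc i]"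
    using 2 unfolding sp by (simp only: append_assoc append_Cons append_Nil)
  show ?thesis using M_cong_trans[OF 1 3] .
qed

lemma absorbR_list: assumes "1 \<le> c" "i < N" "\<forall>k\<in>set ys. c \<le> k \<and> k \<le> i"
  shows "M_cong N ([c..<Suc i] @ ys) [c..<Suc i]"
  using assms(3)
proof (induction ys rule: rev_induct)
  case Nil then show ?case by simp
next
  case (snoc k ys)
  have ys: "\<forall>k\<in>set ys. c \<le> k \<and> k \<le> i" and k: "c \<le> k" "k \<le> i" using snoc.prems by auto
  have a: "M_cong N (([c..<Suc i] @ ys) @ [k]) ([c..<Suc i] @ [k])"
    using snoc.IH[OF ys] by (rule M_cong_ctxR)
  have b: "M_cong N ([c..<Suc i] @ [k]) [c..<Suc i]"
    using absorbR[OF assms(1) k assms(2)] .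
  show ?case using M_cong_trans[OF a b] by (simp only: append_assoc)
qed

lemma absorbL: assumes "1 \<le> c" "c \<le> m" "Suc m \<le> i" "i < N"
  shows "M_cong N (Suc m # [c..<Suc i]) [c..<Suc i]"
proof -
  have sp: "[c..<Suc i] = [c..<m] @ [m, Suc m] @ [Suc (Suc m)..<Suc i]"
    using upt_split[of c m "Suc i"] upt_conv_Cons[of "Suc m" "Suc i"] assms by simp
  have c1: "M_cong N ([c..<m] @ [Suc m]) (Suc m # [c..<m])"
    by (rule commute1) (use assms in \<open>auto simp: commutes_def\<close>)
  have 1: "M_cong N (Suc m # [c..<Suc i]) ([c..<m] @ [Suc m, m, Suc m] @ [Suc (Suc m)..<Suc i])"
    using M_cong_ctxR[OF M_cong_sym[OF c1], of "[m, Suc m] @ [Suc (Suc m)..<Suc i]"] sp by simp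
  have 2: "M_cong N ([c..<m] @ [Suc m, m, Suc m] @ [Suc (Suc m)..<Suc i]) ([c..<m] @ [m, Suc m, m] @ [Suc (Suc m)..<Suc i])"
  proof -
    have "M_rel N [m, Suc m, m] [Suc m, m, Suc m]" using M_rel.braid[of m N] assms by simp
    from M_rel_cong[OF this, of "[c..<m]" "[Suc (Suc m)..<Suc i]"] show ?thesis by (rule M_cong_sym)
  qed
  have c2: "M_cong N ([Suc (Suc m)..<Suc i] @ [m]) (m # [Suc (Suc m)..<Suc i])"
    by (rule commute1) (use assms in \<open>auto simp: commutes_def\<close>)
  have 3: "M_cong N ([c..<m] @ [m, Suc m, m] @ [Suc (Suc m)..<Suc i]) ([c..<Suc i] @ [m])"
    using M_cong_ctxL[OF M_cong_sym[OF c2], of "[c..<m] @ [m, Suc m]"] sp by simp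
  have 4: "M_cong N ([c..<Suc i] @ [m]) [c..<Suc i]"
    using assms by (intro absorbR) auto
  show ?thesis using M_cong_trans[OF 1 M_cong_trans[OF 2 M_cong_trans[OF 3 4]]] .
qed

lemma absorbL_list: assumes "1 \<le> c" "i < N" "\<forall>k\<in>set xs. c < k \<and> k \<le> i"
  shows "M_cong N (xs @ [c..<Suc i]) [c..<Suc i]"
  using assms(3)
proof (induction xs)
  case Nil then show ?case by simp
next
  case (Cons k xs)
  have xs: "\<forall>k\<in>set xs. c < k \<and> k \<le> i" using Cons.prems by simp
  have a: "M_cong N (k # xs @ [c..<Suc i]) (k # [c..<Suc i])"
    using M_cong_ctxL[OF Cons.IH[OF xs], of "[k]"] by simp
  have ck: "c < k" "k \<le> i" using Cons.prems by auto
  define m where "m = k - 1"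
  have km: "k = Suc m" "c \<le> m" using ck unfolding m_def by auto
  then have "M_cong N (k # [c..<Suc i]) [c..<Suc i]"
    using absorbL[of c m i N] km ck assms by simp
  then show ?case using M_cong_trans[OF a] by simp
qed

lemma key: assumes "1 \<le> a" "a \<le> b" "a \<le> i" "b \<le> Suc i" "i < N"
  shows "M_cong N ([b..<Suc i] @ [a..<i] @ [i]) ([a..<Suc i] @ [a..<i])"
proof -
  have e: "[a..<i] @ [i] = [a..<Suc i]" using assms by simp
  have r: "M_cong N ([a..<Suc i] @ [a..<i]) [a..<Suc i]"
    using absorbR_list[of a i N "[a..<i]"] assms by auto
  have l: "M_cong N ([b..<Suc i] @ [a..<Suc i]) [a..<Suc i]"
  proof (cases "a = b")
    case True then show ?thesis using absorbR_list[of a i N "[a..<Suc i]"] assms by auto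
  next
    case False then show ?thesis using absorbL_list[of a i N "[b..<Suc i]"] assms by auto
  qed
  have "M_cong N ([b..<Suc i] @ [a..<i] @ [i]) [a..<Suc i]" using l e by simp
  then show ?thesis using M_cong_trans M_cong_sym[OF r] by blast
qed


fun canonk :: "(nat \<Rightarrow> nat) \<Rightarrow> nat \<Rightarrow> nat list" where
  "canonk f 0 = []"
| "canonk f (Suc x) = [f (Suc x)..<Suc x] @ canonk f x"

definition ndpf :: "(nat \<Rightarrow> nat) \<Rightarrow> bool" where
  "ndpf f \<longleftrightarrow> mono f \<and> (\<forall>x. f x \<le> x) \<and> (\<forall>x\<ge>1. 1 \<le> f x)"

lemma canonk_letters: "ndpf f \<Longrightarrow> k \<in> set (canonk f n) \<Longrightarrow> 1 \<le> k \<and> k < n"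
proof (induction n)
  case 0 then show ?case by simp
next
  case (Suc n)
  have f1: "1 \<le> f (Suc n)" using Suc.prems(1) unfolding ndpf_def by auto
  from Suc.prems(2) have "k \<in> set [f (Suc n)..<Suc n] \<or> k \<in> set (canonk f n)" by (simp del: upt_Suc)
  then show ?case
  proof
    assume "k \<in> set [f (Suc n)..<Suc n]" then show ?case using f1 by auto
  next
    assume "k \<in> set (canonk f n)" then show ?case using Suc.IH Suc.prems(1) by auto
  qed
qed

lemma canonk_agree: "(\<And>x. 1 \<le> x \<Longrightarrow> x \<le> n \<Longrightarrow> f x = h x) \<Longrightarrow> canonk f n = canonk h n"
  by (induction n) auto

lemma canonk_id: "canonk id n = []"
  by (induction n) auto

lemma ndpf_pi: "1 \<le> i \<Longrightarrow> ndpf (pi i)"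
  unfolding ndpf_def pi_def mono_def by auto

lemma ndpf_comp: "ndpf f \<Longrightarrow> ndpf g \<Longrightarrow> ndpf (f \<circ> g)"
  unfolding ndpf_def mono_def by (auto intro: le_trans)

lemma ndpf_id: "ndpf id" unfolding ndpf_def mono_def by auto

lemma ndpf_rep: "\<forall>k\<in>set ws. 1 \<le> k \<Longrightarrow> ndpf (rep ws)"
proof (induction ws)
  case Nil then show ?case using ndpf_id by (simp add: id_def)
next
  case (Cons a ws)
  show ?case unfolding rep_Cons by (rule ndpf_comp[OF ndpf_pi]) (use Cons in auto)
qed

lemma step_base:
  assumes f: "ndpf f" and i: "1 \<le> i" "i < N"
  shows "M_cong N (canonk f (Suc i) @ [i]) (canonk (f \<circ> pi i) (Suc i))"
proof -
  obtain i' where i': "i = Suc i'" using i by (cases i) auto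
  define a where "a = f i"
  define b where "b = f (Suc i)"
  have ff: "mono f" "\<And>x. f x \<le> x" "\<And>x. 1 \<le> x \<Longrightarrow> 1 \<le> f x" using f unfolding ndpf_def by auto
  have ab: "1 \<le> a" "a \<le> b" "a \<le> i" "b \<le> Suc i"
    using ff i unfolding a_def b_def mono_def by auto
  have cf: "canonk f (Suc i) = [b..<Suc i] @ [a..<i] @ canonk f i'"
    using i' a_def b_def by simp
  have ch: "canonk (f \<circ> pi i) (Suc i) = [a..<Suc i] @ [a..<i] @ canonk f i'"
  proof -
    have "canonk (f \<circ> pi i) i' = canonk f i'"
      by (rule canonk_agree) (auto simp: pi_def i')
    then show ?thesis using i' a_def by (simp add: pi_def)
  qed
  have c: "M_cong N (canonk f i' @ [i]) (i # canonk f i')"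
    using canonk_letters[OF f] i i' by (intro commute1) (fastforce simp: commutes_def)
  have 1: "M_cong N (canonk f (Suc i) @ [i]) (([b..<Suc i] @ [a..<i] @ [i]) @ canonk f i')"
    using M_cong_ctxL[OF c, of "[b..<Suc i] @ [a..<i]"] cf by simp
  have 2: "M_cong N (([b..<Suc i] @ [a..<i] @ [i]) @ canonk f i') (([a..<Suc i] @ [a..<i]) @ canonk f i')"
    using M_cong_ctxR[OF key[OF ab(1,2,3,4) i(2)]] .
  show ?thesis using M_cong_trans[OF 1 2] ch by simp
qed

lemma step_gen:
  assumes f: "ndpf f" and i: "1 \<le> i" "i < N"
  shows "Suc i \<le> n \<Longrightarrow> M_cong N (canonk f n @ [i]) (canonk (f \<circ> pi i) n)"
proof (induction n)
  case 0 then show ?case by simp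
next
  case (Suc n)
  show ?case
  proof (cases "n = i")
    case True show ?thesis using step_base[OF f i] unfolding True .
  next
    case False
    then have "Suc i \<le> n" using Suc.prems by simp
    then have prev: "M_cong N ([f (Suc n)..<Suc n] @ canonk f n @ [i]) ([f (Suc n)..<Suc n] @ canonk (f \<circ> pi i) n)"
      using Suc.IH by (intro M_cong_ctxL)
    have e: "(f \<circ> pi i) (Suc n) = f (Suc n)" using False by (simp add: pi_def)
    show ?thesis unfolding canonk.simps e using prev by (simp only: append_assoc)
  qed
qed

lemma to_canon: "is_word N ws \<Longrightarrow> M_cong N ws (canonk (rep ws) N)"
proof (induction ws rule: rev_induct)
  case Nil then show ?case using canonk_id[of N] by (simp add: id_def)
next
  case (snoc i ws)
  then have iw: "is_word N ws" "1 \<le> i" "i < N" by (auto simp: is_word_def)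
  have nd: "ndpf (rep ws)" using iw(1) by (intro ndpf_rep) (auto simp: is_word_def)
  have "M_cong N (ws @ [i]) (canonk (rep ws) N @ [i])"
    using snoc.IH[OF iw(1)] by (rule M_cong_ctxR)
  moreover have "M_cong N (canonk (rep ws) N @ [i]) (canonk (rep ws \<circ> pi i) N)"
    using step_gen[OF nd iw(2,3)] iw by simp
  moreover have "rep (ws @ [i]) = rep ws \<circ> pi i" by (simp add: fun_eq_iff)
  ultimately show ?case using M_cong_trans by metis
qed

lemma completeness: "is_word N u \<Longrightarrow> is_word N v \<Longrightarrow> rep u = rep v \<Longrightarrow> M_cong N u v"
  using to_canon[of N u] to_canon[of N v] M_cong_sym M_cong_trans by metis




definition invset :: "nat \<Rightarrow> (nat \<Rightarrow> nat) \<Rightarrow> (nat \<times> nat) set" where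
  "invset N w = {(x,y). 1 \<le> x \<and> x < y \<and> y \<le> N \<and> w y < w x}"

definition ninv :: "nat \<Rightarrow> (nat \<Rightarrow> nat) \<Rightarrow> nat" where
  "ninv N w = card (invset N w)"

lemma finite_invset: "finite (invset N w)"
proof -
  have "invset N w \<subseteq> {1..N} \<times> {1..N}" unfolding invset_def by auto
  then show ?thesis by (rule finite_subset) auto
qed

lemma ninv_id: "ninv N id = 0"
proof -
  have "invset N id = {}" by (auto simp: invset_def)
  then show ?thesis by (simp add: ninv_def)
qed

lemma ninv_id': "ninv N (\<lambda>x. x) = 0"
  using ninv_id by (simp add: id_def)

lemma st_permutes: "1 \<le> i \<Longrightarrow> i < N \<Longrightarrow> simple_transp i permutes {1..N}"
  unfolding simple_transp_def by (rule permutes_swap_id) auto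

lemma perm_of_word_Nil[simp]: "perm_of_word [] = id"
  by (simp add: perm_of_word_def)
lemma perm_of_word_Cons[simp]: "perm_of_word (i # ws) = simple_transp i \<circ> perm_of_word ws"
  by (simp add: perm_of_word_def)

lemma is_word_Cons[simp]: "is_word N (i # ws) \<longleftrightarrow> 1 \<le> i \<and> i < N \<and> is_word N ws"
  by (auto simp: is_word_def)
lemma is_word_Nil[simp]: "is_word N []"
  by (auto simp: is_word_def)

lemma perm_word_permutes: "is_word N ws \<Longrightarrow> perm_of_word ws permutes {1..N}"
proof (induction ws)
  case Nil then show ?case by (simp only: perm_of_word_Nil permutes_id)
next
  case (Cons i ws) then show ?case unfolding perm_of_word_Cons
    by (intro permutes_compose[OF _ st_permutes]) auto
qed

lemma invs_step:
  assumes w: "w permutes {1..N}" and pq: "1 \<le> p" "p < q" "q \<le> N" and wp: "w p = i" "w q = Suc i"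
  shows "invset N (simple_transp i \<circ> w) = insert (p,q) (invset N w)" "(p,q) \<notin> invset N w"
proof -
  have inj: "inj w" using w by (rule permutes_inj)
  have eq: "w x = i \<longleftrightarrow> x = p" "w x = Suc i \<longleftrightarrow> x = q" for x
    using inj_eq[OF inj, of x p] inj_eq[OF inj, of x q] wp by auto
  show "(p,q) \<notin> invset N w" using wp unfolding invset_def by auto
  show "invset N (simple_transp i \<circ> w) = insert (p,q) (invset N w)"
  proof (rule set_eqI, clarify)
    fix x y
    show "(x, y) \<in> invset N (simple_transp i \<circ> w) \<longleftrightarrow> (x, y) \<in> insert (p, q) (invset N w)"
    proof (cases "x < y")
      case True
      have ne: "w x \<noteq> w y" using True inj by (auto dest: injD)
      show ?thesis
        using True ne eq[of x] eq[of y] pq wp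
        unfolding invset_def simple_transp_def transpose_def by auto
    next
      case False then show ?thesis using pq unfolding invset_def by auto
    qed
  qed
qed

lemma ninv_up:
  assumes w: "w permutes {1..N}" and pq: "1 \<le> p" "p < q" "q \<le> N" and wp: "w p = i" "w q = Suc i"
  shows "ninv N (simple_transp i \<circ> w) = Suc (ninv N w)"
  unfolding ninv_def invs_step[OF assms] using invs_step(2)[OF assms] finite_invset by simp

lemma st_invol: "simple_transp i \<circ> (simple_transp i \<circ> w) = w"
  unfolding simple_transp_def by (simp add: fun_eq_iff)

lemma ninv_down:
  assumes w: "w permutes {1..N}" and i: "1 \<le> i" "i < N" and pq: "1 \<le> q" "q < p" "p \<le> N" and wp: "w p = i" "w q = Suc i"
  shows "ninv N w = Suc (ninv N (simple_transp i \<circ> w))"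
proof -
  let ?w' = "simple_transp i \<circ> w"
  have w': "?w' permutes {1..N}" using w st_permutes[OF i] by (rule permutes_compose)
  have "?w' q = i" "?w' p = Suc i" using wp unfolding simple_transp_def by auto
  from ninv_up[OF w' pq this] show ?thesis unfolding st_invol .
qed

lemma pos_facts:
  assumes w: "w permutes {1..N}" and i: "1 \<le> i" "i < N"
  shows "inv w i \<in> {1..N}" "inv w (Suc i) \<in> {1..N}" "w (inv w i) = i" "w (inv w (Suc i)) = Suc i"
    "inv w i \<noteq> inv w (Suc i)"
proof -
  have iw: "inv w permutes {1..N}" using w by (rule permutes_inv)
  show "inv w i \<in> {1..N}" "inv w (Suc i) \<in> {1..N}"
    using permutes_in_image[OF iw] i by auto
  show "w (inv w i) = i" "w (inv w (Suc i)) = Suc i" using permutes_inverses[OF w] by auto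
  then show "inv w i \<noteq> inv w (Suc i)" by (metis n_not_Suc_n)
qed

lemma ninv_step_le:
  assumes w: "w permutes {1..N}" and i: "1 \<le> i" "i < N"
  shows "ninv N (simple_transp i \<circ> w) \<le> Suc (ninv N w)"
proof -
  note pf = pos_facts[OF w i]
  show ?thesis
  proof (cases "inv w i < inv w (Suc i)")
    case True then show ?thesis using ninv_up[OF w _ True _ pf(3,4)] pf(1,2) by simp
  next
    case False
    then have lt: "inv w (Suc i) < inv w i" using pf(5) by simp
    then show ?thesis using ninv_down[OF w i _ lt _ pf(3,4)] pf(1,2) by simp
  qed
qed

lemma word_len_ge: "is_word N ws \<Longrightarrow> ninv N (perm_of_word ws) \<le> length ws"
proof (induction ws)
  case Nil then show ?case by (simp add: ninv_id ninv_id')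
next
  case (Cons i ws)
  have a: "ninv N (perm_of_word (i # ws)) \<le> Suc (ninv N (perm_of_word ws))"
    unfolding perm_of_word_Cons using Cons.prems by (intro ninv_step_le perm_word_permutes) auto
  have b: "ninv N (perm_of_word ws) \<le> length ws" using Cons by simp
  show ?case using a b by (simp only: length_Cons)
qed

lemma chain_incr:
  assumes "\<And>i. 1 \<le> i \<Longrightarrow> i < N \<Longrightarrow> g i < g (Suc i)"
  shows "1 \<le> i \<Longrightarrow> i + k \<le> N \<Longrightarrow> g i + k \<le> g (i + k)"
proof (induction k)
  case 0 then show ?case by simp
next
  case (Suc k)
  then have "g i + k \<le> g (i + k)" by simp
  moreover have "g (i + k) < g (Suc (i + k))" using Suc.prems by (intro assms) auto
  ultimately show ?case by simp
qed

lemma no_desc_id: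
  assumes w: "w permutes {1..N}" and nd: "\<And>i. 1 \<le> i \<Longrightarrow> i < N \<Longrightarrow> inv w i < inv w (Suc i)"
  shows "w = id"
proof -
  let ?g = "inv w"
  have g: "?g permutes {1..N}" using w by (rule permutes_inv)
  have gx: "?g x = x" if x: "x \<in> {1..N}" for x
  proof -
    have N1: "1 \<le> N" using x by auto
    have a: "?g x + (N - x) \<le> ?g (x + (N - x))" using chain_incr[of N ?g x "N - x", OF nd] x by auto
    have "?g N \<le> N" using permutes_in_image[OF g, of N] N1 by auto
    with a x have le: "?g x \<le> x" by auto
    have b: "?g 1 + (x - 1) \<le> ?g (1 + (x - 1))" using chain_incr[of N ?g 1 "x - 1", OF nd] x by auto
    have "?g 1 \<ge> 1" using permutes_in_image[OF g, of 1] N1 by auto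
    with b x have "?g x \<ge> x" by auto
    with le show ?thesis by simp
  qed
  have "w x = x" for x
  proof (cases "x \<in> {1..N}")
    case True
    then have "w (?g x) = x" using permutes_inverses[OF w] by simp
    then show ?thesis using gx[OF True] by simp
  next
    case False then show ?thesis using permutes_not_in[OF w] by simp
  qed
  then show ?thesis by auto
qed

lemma words_exist:
  "w permutes {1..N} \<Longrightarrow> ninv N w = n \<Longrightarrow> \<exists>ws. is_word N ws \<and> perm_of_word ws = w \<and> length ws = n"
proof (induction n arbitrary: w)
  case 0
  show ?case
  proof (cases "\<exists>i. 1 \<le> i \<and> i < N \<and> inv w (Suc i) < inv w i")
    case True
    then obtain i where i: "1 \<le> i" "i < N" "inv w (Suc i) < inv w i" by auto
    note pf = pos_facts[OF 0(1) i(1,2)]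
    have "ninv N w = Suc (ninv N (simple_transp i \<circ> w))"
      using ninv_down[OF 0(1) i(1,2) _ i(3) _ pf(3,4)] pf(1,2) by simp
    then show ?thesis using 0 by simp
  next
    case False
    then have "w = id" using pos_facts[OF 0(1)] by (intro no_desc_id[OF 0(1)]) (meson linorder_neqE_nat)
    then show ?thesis by (intro exI[of _ "[]"]) simp
  qed
next
  case (Suc n)
  show ?case
  proof (cases "\<exists>i. 1 \<le> i \<and> i < N \<and> inv w (Suc i) < inv w i")
    case True
    then obtain i where i: "1 \<le> i" "i < N" "inv w (Suc i) < inv w i" by auto
    note pf = pos_facts[OF Suc.prems(1) i(1,2)]
    have e: "ninv N w = Suc (ninv N (simple_transp i \<circ> w))"
      using ninv_down[OF Suc.prems(1) i(1,2) _ i(3) _ pf(3,4)] pf(1,2) by simp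
    have w': "simple_transp i \<circ> w permutes {1..N}"
      using Suc.prems(1) st_permutes[OF i(1,2)] by (rule permutes_compose)
    obtain ws where ws: "is_word N ws" "perm_of_word ws = simple_transp i \<circ> w" "length ws = n"
    proof -
      have n_eq: "ninv N (simple_transp i \<circ> w) = n" using e Suc.prems(2) by (simp only: nat.inject)
      show ?thesis using Suc.IH[OF w' n_eq] that by blast
    qed
    show ?thesis using ws i st_invol[of i w] by (intro exI[of _ "i # ws"]) simp
  next
    case False
    then have "w = id" using pos_facts[OF Suc.prems(1)] by (intro no_desc_id[OF Suc.prems(1)]) (meson linorder_neqE_nat)
    then show ?thesis using Suc.prems(2) ninv_id ninv_id' by simp
  qed
qed

lemma red_word_props:
  assumes w: "w permutes {1..N}"
  shows "is_word N (red_word N w)" "perm_of_word (red_word N w) = w" "length (red_word N w) = ninv N w"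
proof -
  obtain ws0 where ws0: "is_word N ws0" "perm_of_word ws0 = w" "length ws0 = ninv N w"
    using words_exist[OF w refl] by blast
  have "reduced_word N w ws0"
    unfolding reduced_word_def using ws0 word_len_ge by fastforce
  then have r: "reduced_word N w (red_word N w)"
    unfolding red_word_def by (rule someI)
  then show "is_word N (red_word N w)" "perm_of_word (red_word N w) = w"
    unfolding reduced_word_def by auto
  have "length (red_word N w) \<le> length ws0" using r ws0 unfolding reduced_word_def by auto
  moreover have "ninv N w \<le> length (red_word N w)"
    using word_len_ge[of N "red_word N w"] r unfolding reduced_word_def by auto
  ultimately show "length (red_word N w) = ninv N w" using ws0 by simp
qed




lemma min_transp:
  assumes S: "finite S" "S \<noteq> {}" and c: "i \<in> S \<longrightarrow> Suc i \<in> S"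
  shows "Min (transpose i (Suc i) ` S) = pi i (Min S)"
proof -
  define m where "m = Min S"
  have mS: "m \<in> S" "\<And>y. y \<in> S \<Longrightarrow> m \<le> y" using S unfolding m_def by auto
  show ?thesis unfolding m_def[symmetric]
  proof (cases "m = Suc i")
    case True
    then have iS: "i \<notin> S" using mS by fastforce
    have "Min (transpose i (Suc i) ` S) = i"
    proof (rule Min_eqI)
      show "finite (transpose i (Suc i) ` S)" using S by simp
      show "i \<in> transpose i (Suc i) ` S" using mS True by (metis image_eqI transpose_apply_second)
      fix y assume "y \<in> transpose i (Suc i) ` S"
      then obtain z where z: "z \<in> S" "y = transpose i (Suc i) z" by auto
      then show "i \<le> y" using mS(2)[OF z(1)] True iS by (auto simp: transpose_def)
    qed
    then show "Min (transpose i (Suc i) ` S) = pi i m" using True by (simp add: pi_def)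
  next
    case False
    have "Min (transpose i (Suc i) ` S) = m"
    proof (rule Min_eqI)
      show "finite (transpose i (Suc i) ` S)" using S by simp
      show "m \<in> transpose i (Suc i) ` S"
      proof (cases "m = i")
        case True
        then have "Suc i \<in> S" using c mS by simp
        then show ?thesis using True by (metis image_eqI transpose_apply_second)
      next
        case False2: False
        then have "transpose i (Suc i) m = m" using False by simp
        then show ?thesis using mS by (metis image_eqI)
      qed
      fix y assume "y \<in> transpose i (Suc i) ` S"
      then obtain z where z: "z \<in> S" "y = transpose i (Suc i) z" by auto
      then show "m \<le> y" using mS(2)[OF z(1)] False by (auto simp: transpose_def)
    qed
    then show "Min (transpose i (Suc i) ` S) = pi i m" using False by (simp add: pi_def)
  qed
qed

lemma tight_rep:
  "is_word N ws \<Longrightarrow> length ws = ninv N (perm_of_word ws) \<Longrightarrow> x \<in> {1..N} \<Longrightarrow>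
   rep ws x = Min (perm_of_word ws ` {x..N})"
proof (induction ws arbitrary: x)
  case Nil
  have "Min {x..N} = x" by (rule Min_eqI) (use Nil in auto)
  then show ?case by simp
next
  case (Cons i ws)
  define v where "v = perm_of_word ws"
  have iw: "1 \<le> i" "i < N" "is_word N ws" using Cons.prems by auto
  have v: "v permutes {1..N}" unfolding v_def using iw(3) by (rule perm_word_permutes)
  note pf = pos_facts[OF v iw(1,2)]
  define p where "p = inv v i"
  define q where "q = inv v (Suc i)"
  have le: "ninv N v \<le> length ws" unfolding v_def using iw(3) by (rule word_len_ge)
  have len: "ninv N (simple_transp i \<circ> v) = Suc (length ws)"
    using Cons.prems(2) unfolding v_def perm_of_word_Cons length_Cons by (rule sym)
  have pq: "p < q"
  proof (rule ccontr)
    assume "\<not> p < q"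
    then have "q < p" using pf(5) unfolding p_def q_def by simp
    then have "ninv N v = Suc (ninv N (simple_transp i \<circ> v))"
      using ninv_down[OF v iw(1,2) _ _ _ pf(3,4)] pf(1,2) unfolding p_def q_def by simp
    then show False using le len by simp
  qed
  have "ninv N (simple_transp i \<circ> v) = Suc (ninv N v)"
    using ninv_up[OF v _ pq _ pf(3,4)[folded p_def q_def]] pf(1,2) unfolding p_def q_def by simp
  then have tight: "length ws = ninv N (perm_of_word ws)" using len unfolding v_def by simp
  have IH: "rep ws x = Min (v ` {x..N})" using Cons.IH[OF iw(3) tight Cons.prems(3)] v_def by simp
  have fin: "finite (v ` {x..N})" "v ` {x..N} \<noteq> {}" using Cons.prems(3) by auto
  have cond: "i \<in> v ` {x..N} \<longrightarrow> Suc i \<in> v ` {x..N}"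
  proof
    assume "i \<in> v ` {x..N}"
    then obtain y where y: "y \<in> {x..N}" "v y = i" by auto
    then have "y = p" unfolding p_def using permutes_inverses[OF v] by metis
    then have "q \<in> {x..N}" using y pq pf(2) unfolding q_def by auto
    then show "Suc i \<in> v ` {x..N}" using pf(4) unfolding q_def by (metis image_eqI)
  qed
  have "rep (i # ws) x = pi i (Min (v ` {x..N}))" using IH by simp
  also have "\<dots> = Min (transpose i (Suc i) ` (v ` {x..N}))" using min_transp[OF fin cond] by simp
  also have "transpose i (Suc i) ` (v ` {x..N}) = perm_of_word (i # ws) ` {x..N}"
    unfolding v_def perm_of_word_Cons simple_transp_def image_comp ..
  finally show ?case .
qed

lemma rep_outside: "is_word N ws \<Longrightarrow> x \<notin> {1..N} \<Longrightarrow> rep ws x = x"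
  by (induction ws) (auto simp: pi_def)

definition Frep :: "nat \<Rightarrow> (nat \<Rightarrow> nat) \<Rightarrow> nat \<Rightarrow> nat" where
  "Frep N w x = (if x \<in> {1..N} then Min (w ` {x..N}) else x)"

lemma rep_tight_Frep: "is_word N ws \<Longrightarrow> length ws = ninv N (perm_of_word ws) \<Longrightarrow>
   rep ws = Frep N (perm_of_word ws)"
  using tight_rep rep_outside unfolding Frep_def by (auto simp: fun_eq_iff)

lemma rep_red: "w permutes {1..N} \<Longrightarrow> rep (red_word N w) = Frep N w"
  using rep_tight_Frep[of N "red_word N w"] red_word_props[of w N] by simp

definition rv :: "nat \<Rightarrow> nat \<Rightarrow> nat" where
  "rv N x = (if x \<in> {1..N} then Suc N - x else x)"

lemma rv_rv[simp]: "rv N (rv N x) = x"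
  unfolding rv_def by auto

lemma rv_comp_rv: "rv N \<circ> (rv N \<circ> f) = f"
  by (simp add: fun_eq_iff)

lemma st_conj: "1 \<le> i \<Longrightarrow> i < N \<Longrightarrow> simple_transp (N - i) = rv N \<circ> simple_transp i \<circ> rv N"
  unfolding simple_transp_def fun_eq_iff rv_def transpose_def by auto

lemma Psi_Cons[simp]: "Psi_word N (i # ws) = (N - i) # Psi_word N ws"
  by (simp add: Psi_word_def)
lemma Psi_Nil[simp]: "Psi_word N [] = []"
  by (simp add: Psi_word_def)
lemma Psi_length[simp]: "length (Psi_word N ws) = length ws"
  by (simp add: Psi_word_def)

lemma perm_Psi: "is_word N ws \<Longrightarrow> perm_of_word (Psi_word N ws) = rv N \<circ> perm_of_word ws \<circ> rv N"
proof (induction ws)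
  case Nil then show ?case by (simp add: fun_eq_iff)
next
  case (Cons i ws)
  have IH: "\<forall>x. perm_of_word (Psi_word N ws) x = rv N (perm_of_word ws (rv N x))"
    using Cons by (simp add: fun_eq_iff)
  have st: "\<forall>x. simple_transp (N-i) x = rv N (simple_transp i (rv N x))"
    using st_conj[of i N] Cons.prems by (simp add: fun_eq_iff)
  show ?case using IH st by (simp add: fun_eq_iff)
qed

lemma is_word_Psi: "is_word N ws \<Longrightarrow> is_word N (Psi_word N ws)"
  by (induction ws) auto

lemma rv_permutes: "rv N permutes {1..N}"
  unfolding permutes_def
proof (intro conjI allI impI)
  fix x assume "x \<notin> {1..N}" then show "rv N x = x" unfolding rv_def by auto
next
  fix y show "\<exists>!x. rv N x = y"
    by (rule ex1I[of _ "rv N y"]) (simp, metis rv_rv)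
qed

lemma conj_permutes: "w permutes {1..N} \<Longrightarrow> rv N \<circ> w \<circ> rv N permutes {1..N}"
  using permutes_compose[OF rv_permutes] permutes_compose[OF _ rv_permutes] by blast

lemma ninv_conj_le:
  assumes w: "w permutes {1..N}"
  shows "ninv N (rv N \<circ> w \<circ> rv N) \<le> ninv N w"
proof -
  let ?ws = "Psi_word N (red_word N w)"
  have "is_word N ?ws" using red_word_props(1)[OF w] by (rule is_word_Psi)
  moreover have "perm_of_word ?ws = rv N \<circ> w \<circ> rv N"
    using perm_Psi[OF red_word_props(1)[OF w]] red_word_props(2)[OF w] by simp
  ultimately show ?thesis using word_len_ge[of N ?ws] red_word_props(3)[OF w] by simp
qed

lemma ninv_conj:
  assumes w: "w permutes {1..N}"
  shows "ninv N (rv N \<circ> w \<circ> rv N) = ninv N w"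
proof -
  have "ninv N (rv N \<circ> (rv N \<circ> w \<circ> rv N) \<circ> rv N) \<le> ninv N (rv N \<circ> w \<circ> rv N)"
    using conj_permutes[OF w] by (rule ninv_conj_le)
  moreover have "rv N \<circ> (rv N \<circ> w \<circ> rv N) \<circ> rv N = w" by (simp add: fun_eq_iff)
  ultimately show ?thesis using ninv_conj_le[OF w] by simp
qed

lemma rep_Psi_red: "w permutes {1..N} \<Longrightarrow> rep (Psi_word N (red_word N w)) = Frep N (rv N \<circ> w \<circ> rv N)"
proof -
  assume w: "w permutes {1..N}"
  let ?ws = "Psi_word N (red_word N w)"
  have iw: "is_word N ?ws" using red_word_props(1)[OF w] by (rule is_word_Psi)
  have pw: "perm_of_word ?ws = rv N \<circ> w \<circ> rv N"
    using perm_Psi[OF red_word_props(1)[OF w]] red_word_props(2)[OF w] by simp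
  have "length ?ws = ninv N (perm_of_word ?ws)"
    unfolding pw ninv_conj[OF w] using red_word_props(3)[OF w] by simp
  then show ?thesis using rep_tight_Frep[OF iw] pw by simp
qed




lemma M_class_eq_iff: "M_class N u = M_class N v \<longleftrightarrow> M_cong N u v"
proof
  assume e: "M_class N u = M_class N v"
  have "v \<in> M_class N v" by (simp add: M_class_def)
  then have "v \<in> M_class N u" using e by simp
  then show "M_cong N u v" by (simp add: M_class_def)
next
  assume "M_cong N u v"
  then show "M_class N u = M_class N v"
    unfolding M_class_def using M_cong_trans M_cong_sym by blast
qed

lemma class_eq_iff_rep: "is_word N u \<Longrightarrow> is_word N v \<Longrightarrow> M_class N u = M_class N v \<longleftrightarrow> rep u = rep v"
  using M_class_eq_iff M_cong_rep completeness by metis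

lemma omega_iff:
  assumes w1: "w1 permutes {1..N}" and w2: "w2 permutes {1..N}"
  shows "omega N w1 = omega N w2 \<longleftrightarrow>
    Frep N w1 = Frep N w2 \<and> Frep N (rv N \<circ> w1 \<circ> rv N) = Frep N (rv N \<circ> w2 \<circ> rv N)"
proof -
  have a: "M_class N (red_word N w1) = M_class N (red_word N w2) \<longleftrightarrow> Frep N w1 = Frep N w2"
    using class_eq_iff_rep[OF red_word_props(1)[OF w1] red_word_props(1)[OF w2]] rep_red[OF w1] rep_red[OF w2]
    by simp
  have b: "M_class N (Psi_word N (red_word N w1)) = M_class N (Psi_word N (red_word N w2)) \<longleftrightarrow>
       Frep N (rv N \<circ> w1 \<circ> rv N) = Frep N (rv N \<circ> w2 \<circ> rv N)"
    using class_eq_iff_rep[OF is_word_Psi[OF red_word_props(1)[OF w1]] is_word_Psi[OF red_word_props(1)[OF w2]]]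
      rep_Psi_red[OF w1] rep_Psi_red[OF w2] by simp
  show ?thesis unfolding omega_def using a b by simp
qed

lemma Frep_iff: "Frep N w1 = Frep N w2 \<longleftrightarrow> (\<forall>x\<in>{1..N}. Min (w1 ` {x..N}) = Min (w2 ` {x..N}))"
  unfolding Frep_def fun_eq_iff by (metis (no_types, lifting))

lemma conj_min:
  assumes w: "w permutes {1..N}" and x: "x \<in> {1..N}"
  shows "Min ((rv N \<circ> w \<circ> rv N) ` {x..N}) = Suc N - Max (w ` {1..Suc N - x})"
proof -
  have "(rv N \<circ> w \<circ> rv N) ` {x..N} = (\<lambda>v. Suc N - v) ` (w ` {1..Suc N - x})"
  proof (rule set_eqI, rule iffI)
    fix z assume "z \<in> (rv N \<circ> w \<circ> rv N) ` {x..N}"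
    then obtain y where y: "y \<in> {x..N}" "z = rv N (w (rv N y))" by auto
    have r1: "rv N y = Suc N - y" "Suc N - y \<in> {1..Suc N - x}" using y x unfolding rv_def by auto
    have "Suc N - y \<in> {1..N}" using r1(2) x by auto
    then have "w (Suc N - y) \<in> {1..N}" using permutes_in_image[OF w, of "Suc N - y"] by blast
    then have "z = Suc N - w (Suc N - y)" using y(2) r1 unfolding rv_def by simp
    then show "z \<in> (\<lambda>v. Suc N - v) ` (w ` {1..Suc N - x})" using r1(2) by blast
  next
    fix z assume "z \<in> (\<lambda>v. Suc N - v) ` (w ` {1..Suc N - x})"
    then obtain u where u: "u \<in> {1..Suc N - x}" "z = Suc N - w u" by auto
    define y where "y = Suc N - u"
    have y: "y \<in> {x..N}" "rv N y = u" using u x unfolding y_def rv_def by auto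
    have "u \<in> {1..N}" using u x by auto
    then have "w u \<in> {1..N}" using permutes_in_image[OF w, of u] by blast
    then have "z = rv N (w (rv N y))" using u y unfolding rv_def by simp
    then show "z \<in> (rv N \<circ> w \<circ> rv N) ` {x..N}" using y by auto
  qed
  moreover have "Min ((\<lambda>v. Suc N - v) ` (w ` {1..Suc N - x})) = Suc N - Max (w ` {1..Suc N - x})"
  proof (rule Min_eqI)
    show "finite ((\<lambda>v. Suc N - v) ` (w ` {1..Suc N - x}))" by simp
    have ne: "w ` {1..Suc N - x} \<noteq> {}" using x by auto
    show "Suc N - Max (w ` {1..Suc N - x}) \<in> (\<lambda>v. Suc N - v) ` (w ` {1..Suc N - x})"
      using Max_in[OF _ ne] by simp
    fix y assume "y \<in> (\<lambda>v. Suc N - v) ` (w ` {1..Suc N - x})"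
    then obtain u where "u \<in> w ` {1..Suc N - x}" "y = Suc N - u" by auto
    then show "Suc N - Max (w ` {1..Suc N - x}) \<le> y" by (simp add: diff_le_mono2)
  qed
  ultimately show ?thesis by simp
qed

lemma max_le_N:
  fixes w :: "nat \<Rightarrow> nat"
  assumes w: "w permutes {1..N}" and x: "x \<in> {1..N}"
  shows "Max (w ` {1..x}) \<le> N"
proof -
  have "w ` {1..x} \<noteq> {}" using x by auto
  then have "Max (w ` {1..x}) \<in> w ` {1..x}" by (intro Max_in finite_imageI finite_atLeastAtMost)
  then obtain z where z: "z \<in> {1..x}" "Max (w ` {1..x}) = w z" by blast
  then have "z \<in> {1..N}" using x by auto
  then have "w z \<in> {1..N}" using permutes_in_image[OF w, of z] by blast
  then show ?thesis using z by simp
qed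

lemma Frep_conj_iff:
  assumes w1: "w1 permutes {1..N}" and w2: "w2 permutes {1..N}"
  shows "Frep N (rv N \<circ> w1 \<circ> rv N) = Frep N (rv N \<circ> w2 \<circ> rv N) \<longleftrightarrow>
         (\<forall>x\<in>{1..N}. Max (w1 ` {1..x}) = Max (w2 ` {1..x}))"
proof -
  have "(\<forall>x\<in>{1..N}. Min ((rv N \<circ> w1 \<circ> rv N) ` {x..N}) = Min ((rv N \<circ> w2 \<circ> rv N) ` {x..N})) \<longleftrightarrow>
        (\<forall>x\<in>{1..N}. Max (w1 ` {1..x}) = Max (w2 ` {1..x}))"
  proof
    assume h: "\<forall>x\<in>{1..N}. Min ((rv N \<circ> w1 \<circ> rv N) ` {x..N}) = Min ((rv N \<circ> w2 \<circ> rv N) ` {x..N})"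
    show "\<forall>x\<in>{1..N}. Max (w1 ` {1..x}) = Max (w2 ` {1..x})"
    proof
      fix x assume x: "x \<in> {1..N}"
      have x': "Suc N - x \<in> {1..N}" "Suc N - (Suc N - x) = x" using x by auto
      have "Suc N - Max (w1 ` {1..x}) = Suc N - Max (w2 ` {1..x})"
        using h[rule_format, OF x'(1)] conj_min[OF w1 x'(1)] conj_min[OF w2 x'(1)] x'(2) by simp
      then show "Max (w1 ` {1..x}) = Max (w2 ` {1..x})"
        using max_le_N[OF w1 x] max_le_N[OF w2 x] by simp
    qed
  next
    assume h: "\<forall>x\<in>{1..N}. Max (w1 ` {1..x}) = Max (w2 ` {1..x})"
    show "\<forall>x\<in>{1..N}. Min ((rv N \<circ> w1 \<circ> rv N) ` {x..N}) = Min ((rv N \<circ> w2 \<circ> rv N) ` {x..N})"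
    proof
      fix x assume x: "x \<in> {1..N}"
      have x': "Suc N - x \<in> {1..N}" using x by auto
      show "Min ((rv N \<circ> w1 \<circ> rv N) ` {x..N}) = Min ((rv N \<circ> w2 \<circ> rv N) ` {x..N})"
        using h[rule_format, OF x'] conj_min[OF w1 x] conj_min[OF w2 x] by simp
    qed
  qed
  then show ?thesis using Frep_iff by simp
qed




lemma uniq_aux:
  fixes w1 w2 :: "nat \<Rightarrow> nat"
  assumes w1: "w1 permutes {1..N}" and w2: "w2 permutes {1..N}"
    and av: "avoids_4321 N w2"
    and S: "\<forall>x\<in>{1..N}. Min (w1 ` {x..N}) = Min (w2 ` {x..N})"
    and P: "\<forall>x\<in>{1..N}. Max (w1 ` {1..x}) = Max (w2 ` {1..x})"
    and x: "x \<in> {1..N}" and lt: "w1 x < w2 x" and before: "\<forall>y\<in>{1..N}. y < x \<longrightarrow> w1 y = w2 y"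
  shows False
proof -
  have inj1: "inj w1" and inj2: "inj w2" using w1 w2 by (auto intro: permutes_inj)
  define y where "y = inv w2 (w1 x)"
  have w1x: "w1 x \<in> {1..N}" using permutes_in_image[OF w1] x by simp
  have y: "y \<in> {1..N}" "w2 y = w1 x"
    using permutes_in_image[OF permutes_inv[OF w2]] w1x permutes_inverses[OF w2] unfolding y_def by auto
  have xy: "x < y"
  proof (rule ccontr)
    assume "\<not> x < y"
    moreover have "y \<noteq> x" using y(2) lt by auto
    ultimately have "y < x" by simp
    then have "w1 y = w1 x" using before y by auto
    then show False using \<open>y \<noteq> x\<close> inj_eq[OF inj1] by auto
  qed
  obtain a where a: "1 \<le> a" "a < x" "w2 a > w2 x"
  proof -
    let ?M = "Max (w2 ` {1..x})"
    have fin: "finite (w1 ` {1..x})" "w1 ` {1..x} \<noteq> {}" using x by auto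
    have "Max (w1 ` {1..x}) \<in> w1 ` {1..x}" using Max_in[OF fin] .
    then obtain z where z: "z \<in> {1..x}" "w1 z = ?M" using P x by auto
    have "w2 x \<le> ?M" using x by (intro Max_ge) auto
    have zx: "z \<noteq> x"
    proof
      assume "z = x"
      then have "?M < w2 x" using z(2) lt by simp
      then show False using \<open>w2 x \<le> ?M\<close> by simp
    qed
    then have "w2 z = ?M" using before z x by auto
    moreover have "w2 z \<noteq> w2 x" using zx inj_eq[OF inj2] by auto
    ultimately have gt: "w2 z > w2 x" using \<open>w2 x \<le> ?M\<close> by simp
    show ?thesis by (rule that[of z]) (use z zx gt in auto)
  qed
  obtain b where b: "y < b" "b \<le> N" "w2 b < w2 y"
  proof -
    let ?m = "Min (w2 ` {y..N})"
    have fin: "finite (w2 ` {y..N})" "w2 ` {y..N} \<noteq> {}" using y by auto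
    have mem: "w2 y \<in> w2 ` {y..N}" using y(1) by (intro imageI) simp
    have mle: "?m \<le> w2 y" using Min_le[OF finite_imageI[OF finite_atLeastAtMost] mem] .
    have ne: "?m \<noteq> w2 y"
    proof
      assume e: "?m = w2 y"
      have "Min (w1 ` {y..N}) \<in> w1 ` {y..N}" using y by (intro Min_in) auto
      then obtain z where z: "z \<in> {y..N}" "w1 z = ?m" using S y by auto
      then have "w1 z = w1 x" using e y by simp
      then show False using z xy inj_eq[OF inj1] by auto
    qed
    have "?m \<in> w2 ` {y..N}" using Min_in[OF fin] .
    then obtain z where z: "z \<in> {y..N}" "w2 z = ?m" by auto
    then have "z \<noteq> y" using ne by auto
    then have zy: "z > y" using z by auto
    have "?m < w2 y" using mle ne by (rule le_neq_trans)
    then have "w2 z < w2 y" using z(2) by simp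
    note zy this
    then show ?thesis by (rule_tac that[of z]) (use z in auto)
  qed
  have "w2 a > w2 x" "w2 x > w2 y" "w2 y > w2 b" using a lt y b by auto
  then show False using av a xy b unfolding avoids_4321_def by blast
qed

lemma uniq:
  fixes w1 w2 :: "nat \<Rightarrow> nat"
  assumes w1: "w1 permutes {1..N}" and w2: "w2 permutes {1..N}"
    and av1: "avoids_4321 N w1" and av2: "avoids_4321 N w2"
    and S: "\<forall>x\<in>{1..N}. Min (w1 ` {x..N}) = Min (w2 ` {x..N})"
    and P: "\<forall>x\<in>{1..N}. Max (w1 ` {1..x}) = Max (w2 ` {1..x})"
  shows "w1 = w2"
proof (rule ccontr)
  assume ne: "w1 \<noteq> w2"
  have "\<exists>x. x \<in> {1..N} \<and> w1 x \<noteq> w2 x"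
  proof (rule ccontr)
    assume "\<not> ?thesis"
    then have "w1 x = w2 x" for x
      using permutes_not_in[OF w1, of x] permutes_not_in[OF w2, of x] by (cases "x \<in> {1..N}") auto
    then show False using ne by auto
  qed
  define x where "x = (LEAST x. x \<in> {1..N} \<and> w1 x \<noteq> w2 x)"
  have x: "x \<in> {1..N}" "w1 x \<noteq> w2 x"
    using LeastI_ex[OF \<open>\<exists>x. _\<close>] unfolding x_def by auto
  have before: "\<forall>y\<in>{1..N}. y < x \<longrightarrow> w1 y = w2 y"
    using not_less_Least[of _ "\<lambda>x. x \<in> {1..N} \<and> w1 x \<noteq> w2 x"] unfolding x_def by blast
  show False
  proof (cases "w1 x < w2 x")
    case True then show False using uniq_aux[OF w1 w2 av2 S P x(1) True before] by simp
  next
    case False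
    then have "w2 x < w1 x" using x(2) by simp
    then show False using uniq_aux[OF w2 w1 av1 _ _ x(1)] S P before by auto
  qed
qed

lemma dom_max:
  fixes A B :: "nat set"
  assumes "finite A" "finite B" "A \<noteq> {}" "B \<noteq> {}"
    "\<forall>a\<in>A. \<exists>b\<in>B. a \<le> b" "\<forall>b\<in>B. \<exists>a\<in>A. b \<le> a"
  shows "Max A = Max B"
proof (rule order.antisym)
  obtain b where "b \<in> B" "Max A \<le> b" using assms Max_in[of A] by blast
  then show "Max A \<le> Max B" using assms by (meson Max_ge order_trans)
next
  obtain a where "a \<in> A" "Max B \<le> a" using assms Max_in[of B] by blast
  then show "Max B \<le> Max A" using assms by (meson Max_ge order_trans)
qed

lemma dom_min:
  fixes A B :: "nat set"
  assumes "finite A" "finite B" "A \<noteq> {}" "B \<noteq> {}"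
    "\<forall>a\<in>A. \<exists>b\<in>B. b \<le> a" "\<forall>b\<in>B. \<exists>a\<in>A. a \<le> b"
  shows "Min A = Min B"
proof (rule order.antisym)
  obtain a where "a \<in> A" "a \<le> Min B" using assms Min_in[of B] by blast
  then show "Min A \<le> Min B" using assms by (meson Min_le order_trans)
next
  obtain b where "b \<in> B" "b \<le> Min A" using assms Min_in[of A] by blast
  then show "Min B \<le> Min A" using assms by (meson Min_le order_trans)
qed

definition mu :: "nat \<Rightarrow> (nat \<Rightarrow> nat) \<Rightarrow> nat" where
  "mu N w = (\<Sum>x\<in>{1..N}. x * w x)"

lemma swap_apply:
  "(w \<circ> transpose j k) j = w k" "(w \<circ> transpose j k) k = w j"
  "y \<noteq> j \<Longrightarrow> y \<noteq> k \<Longrightarrow> (w \<circ> transpose j k) y = w y"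
  by auto

lemma mu_swap:
  fixes w :: "nat \<Rightarrow> nat"
  assumes jk: "1 \<le> j" "j < k" "k \<le> N" and wjk: "w k < w j"
  shows "mu N w < mu N (w \<circ> transpose j k)"
proof -
  let ?w' = "w \<circ> transpose j k"
  let ?A = "{1..N} - {j} - {k}"
  have fin: "finite {1..N}" by simp
  have split: "(\<Sum>x\<in>{1..N}. f x) = f j + f k + (\<Sum>x\<in>?A. f x)" for f :: "nat \<Rightarrow> nat"
  proof -
    have "(\<Sum>x\<in>{1..N}. f x) = f j + (\<Sum>x\<in>{1..N} - {j}. f x)"
      using jk by (intro sum.remove) auto
    also have "(\<Sum>x\<in>{1..N} - {j}. f x) = f k + (\<Sum>x\<in>?A. f x)"
      using jk by (intro sum.remove) auto
    finally show ?thesis by simp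
  qed
  have rest: "(\<Sum>x\<in>?A. x * ?w' x) = (\<Sum>x\<in>?A. x * w x)"
    by (rule sum.cong) auto
  have m1: "mu N w = j * w j + k * w k + (\<Sum>x\<in>?A. x * w x)"
    unfolding mu_def by (rule split)
  have m2: "mu N ?w' = j * w k + k * w j + (\<Sum>x\<in>?A. x * w x)"
    unfolding mu_def using split[of "\<lambda>x. x * ?w' x"] rest swap_apply[where w=w and j=j and k=k] by simp
  obtain d where d: "k = j + d" "0 < d" using jk by (metis less_imp_add_positive)
  obtain e where e: "w j = w k + e" "0 < e" using wjk by (metis less_imp_add_positive)
  have "j * w j + k * w k < j * w k + k * w j"
    unfolding d(1) e(1) using d(2) e(2) by (simp add: algebra_simps)
  then show ?thesis using m1 m2 by simp
qed

lemma swap_data: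
  fixes w :: "nat \<Rightarrow> nat"
  assumes w: "w permutes {1..N}"
    and pat: "1 \<le> i" "i < j" "j < k" "k < l" "l \<le> N" "w i > w j" "w j > w k" "w k > w l"
    and x: "x \<in> {1..N}"
  shows "Max ((w \<circ> transpose j k) ` {1..x}) = Max (w ` {1..x})"
    "Min ((w \<circ> transpose j k) ` {x..N}) = Min (w ` {x..N})"
proof -
  let ?w' = "w \<circ> transpose j k"
  note sa = swap_apply[where w=w and j=j and k=k]
  show "Max (?w' ` {1..x}) = Max (w ` {1..x})"
  proof (rule dom_max)
    show "finite (?w' ` {1..x})" "finite (w ` {1..x})" by auto
    show "?w' ` {1..x} \<noteq> {}" "w ` {1..x} \<noteq> {}" using x by auto
    show "\<forall>a\<in>?w' ` {1..x}. \<exists>b\<in>w ` {1..x}. a \<le> b"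
    proof
      fix a assume "a \<in> ?w' ` {1..x}"
      then obtain y where y: "y \<in> {1..x}" "a = ?w' y" by blast
      show "\<exists>b\<in>w ` {1..x}. a \<le> b"
      proof (cases "y = j \<or> y = k")
        case True
        then have "j \<in> {1..x}" "a \<le> w j" using y pat sa by auto
        then show ?thesis by blast
      next
        case False then show ?thesis using y sa by auto
      qed
    qed
    show "\<forall>b\<in>w ` {1..x}. \<exists>a\<in>?w' ` {1..x}. b \<le> a"
    proof
      fix b assume "b \<in> w ` {1..x}"
      then obtain y where y: "y \<in> {1..x}" "b = w y" by blast
      show "\<exists>a\<in>?w' ` {1..x}. b \<le> a"
      proof (cases "y = j")
        case True
        then have "i \<in> {1..x}" "b \<le> ?w' i" using y pat sa by auto
        then show ?thesis by blast
      next
        case F1: False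
        show ?thesis
        proof (cases "y = k")
          case True
          then have "j \<in> {1..x}" "b \<le> ?w' j" using y pat sa by auto
          then show ?thesis by blast
        next
          case False then show ?thesis using y sa F1 by (metis image_eqI order_refl)
        qed
      qed
    qed
  qed
  show "Min (?w' ` {x..N}) = Min (w ` {x..N})"
  proof (rule dom_min)
    show "finite (?w' ` {x..N})" "finite (w ` {x..N})" by auto
    show "?w' ` {x..N} \<noteq> {}" "w ` {x..N} \<noteq> {}" using x by auto
    show "\<forall>a\<in>?w' ` {x..N}. \<exists>b\<in>w ` {x..N}. b \<le> a"
    proof
      fix a assume "a \<in> ?w' ` {x..N}"
      then obtain y where y: "y \<in> {x..N}" "a = ?w' y" by blast
      show "\<exists>b\<in>w ` {x..N}. b \<le> a"
      proof (cases "y = j \<or> y = k")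
        case True
        then have "k \<in> {x..N}" "w k \<le> a" using y pat sa by auto
        then show ?thesis by blast
      next
        case False then show ?thesis using y sa by auto
      qed
    qed
    show "\<forall>b\<in>w ` {x..N}. \<exists>a\<in>?w' ` {x..N}. a \<le> b"
    proof
      fix b assume "b \<in> w ` {x..N}"
      then obtain y where y: "y \<in> {x..N}" "b = w y" by blast
      show "\<exists>a\<in>?w' ` {x..N}. a \<le> b"
      proof (cases "y = j")
        case True
        then have "k \<in> {x..N}" "?w' k \<le> b" using y pat sa by auto
        then show ?thesis by blast
      next
        case F1: False
        show ?thesis
        proof (cases "y = k")
          case True
          then have "l \<in> {x..N}" "?w' l \<le> b" using y pat sa by auto
          then show ?thesis by blast
        next
          case False then show ?thesis using y sa F1 by (metis image_eqI order_refl)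
        qed
      qed
    qed
  qed
qed

lemma exist:
  fixes v :: "nat \<Rightarrow> nat"
  assumes v: "v permutes {1..N}"
  shows "\<exists>w. w permutes {1..N} \<and> avoids_4321 N w \<and>
    (\<forall>x\<in>{1..N}. Min (w ` {x..N}) = Min (v ` {x..N})) \<and>
    (\<forall>x\<in>{1..N}. Max (w ` {1..x}) = Max (v ` {1..x}))"
proof -
  define W where "W = {w. w permutes {1..N} \<and>
    (\<forall>x\<in>{1..N}. Min (w ` {x..N}) = Min (v ` {x..N})) \<and>
    (\<forall>x\<in>{1..N}. Max (w ` {1..x}) = Max (v ` {1..x}))}"
  have finW: "finite W"
    by (rule finite_subset[OF _ finite_permutations[of "{1..N::nat}"]]) (auto simp: W_def)
  have vW: "v \<in> W" using v by (simp add: W_def)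
  have "mu N ` W \<noteq> {}" using vW by auto
  then have "Max (mu N ` W) \<in> mu N ` W" using finW by simp
  then obtain w where wW: "w \<in> W" and wmax: "mu N w = Max (mu N ` W)" by auto
  have le: "mu N w' \<le> mu N w" if "w' \<in> W" for w'
    using that finW wmax by simp
  have wp: "w permutes {1..N}" using wW by (simp add: W_def)
  have av: "avoids_4321 N w"
    unfolding avoids_4321_def
  proof
    assume "\<exists>i j k l. 1 \<le> i \<and> i < j \<and> j < k \<and> k < l \<and> l \<le> N \<and> w j < w i \<and> w k < w j \<and> w l < w k"
    then obtain i j k l where pat: "1 \<le> i" "i < j" "j < k" "k < l" "l \<le> N" "w i > w j" "w j > w k" "w k > w l"
      by blast
    let ?w' = "w \<circ> transpose j k"
    have w'p: "?w' permutes {1..N}"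
      using permutes_compose[OF permutes_swap_id wp, of j k] pat by auto
    have "?w' \<in> W"
      using wW w'p swap_data[OF wp pat] unfolding W_def by auto
    moreover have "mu N w < mu N ?w'" using mu_swap[of j k N w] pat by auto
    ultimately show False using le by fastforce
  qed
  show ?thesis using wW av unfolding W_def by blast
qed

theorem mainTheorem3:
  fixes N :: nat and c :: "nat list set \<times> nat list set"
  assumes "N \<ge> 1"
    and "{w. w permutes {1..N} \<and> omega N w = c} \<noteq> {}"
  shows "\<exists>!w. w permutes {1..N} \<and> omega N w = c \<and> avoids_4321 N w"
proof -
  obtain v where v: "v permutes {1..N}" "omega N v = c" using assms(2) by auto
  obtain w where w: "w permutes {1..N}" "avoids_4321 N w"
    "\<forall>x\<in>{1..N}. Min (w ` {x..N}) = Min (v ` {x..N})"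
    "\<forall>x\<in>{1..N}. Max (w ` {1..x}) = Max (v ` {1..x})"
    using exist[OF v(1)] by blast
  have "omega N w = omega N v"
    using omega_iff[OF w(1) v(1)] Frep_iff[of N w v] Frep_conj_iff[OF w(1) v(1)] w(3,4) by simp
  then have wc: "omega N w = c" using v by simp
  show ?thesis
  proof (rule ex1I[of _ w])
    show "w permutes {1..N} \<and> omega N w = c \<and> avoids_4321 N w" using w wc by simp
  next
    fix u assume u: "u permutes {1..N} \<and> omega N u = c \<and> avoids_4321 N u"
    then have "omega N u = omega N w" using wc by simp
    then have "Frep N u = Frep N w \<and> Frep N (rv N \<circ> u \<circ> rv N) = Frep N (rv N \<circ> w \<circ> rv N)"
      using omega_iff[OF _ w(1)] u by blast
    then have "(\<forall>x\<in>{1..N}. Min (u ` {x..N}) = Min (w ` {x..N}))"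
      "(\<forall>x\<in>{1..N}. Max (u ` {1..x}) = Max (w ` {1..x}))"
      using Frep_iff[of N u w] Frep_conj_iff[OF _ w(1), of u] u by auto
    then show "u = w" using uniq[of u N w] u w by blast
  qed
qed


end
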